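(* Let $K\subset\mathbb R^m$ be a smooth cone and $h:\mathbb R^n\to\mathbb R^m$ a continuously differentiable $K$-concave function, and let $S=\{x\in\mathbb R^n: h(x)\in K\}$. Then for all $x,u\in S$ with $h(x)=h(u)=0$, $$\operatorname{Ker} h'(x)^*\cap K^\circ=\operatorname{Ker} h'(u)^*\cap K^\circ.$$
   Context: $h$ is $K$-concave if $h((1-\lambda)x+\lambda y)-[(1-\lambda)h(x)+\lambda h(y)]\in K$ for all $x,y\in\mathbb R^n$, $\lambda\in[0,1]$. $h'(x)^*$ is the adjoint of the Jacobian $h'(x)$, $K^\circ$ the polar cone. A cone is regular if it is pointed, closed, convex, with nonempty interior. A regular cone $C$ is smooth if every boundary point of $C$ lies on an extreme ray of $C$ (a ray $\{\lambda x:\lambda\ge0\}$, $x\ne0$, which is a face of $C$) and, for every non-zero point $x$ of any extreme ray, the normal cone $N_C(x)$ has dimension one. *)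

theory Defs
  imports "HOL-Analysis.Analysis"
begin

definition K_concave :: "'m::euclidean_space set \<Rightarrow> ('n::euclidean_space \<Rightarrow> 'm) \<Rightarrow> bool" where
  "K_concave K h \<longleftrightarrow> (\<forall>x y. \<forall>t::real. 0 \<le> t \<and> t \<le> 1 \<longrightarrow>
     h ((1 - t) *\<^sub>R x + t *\<^sub>R y) - ((1 - t) *\<^sub>R h x + t *\<^sub>R h y) \<in> K)"

definition polar_cone :: "'a::euclidean_space set \<Rightarrow> 'a set" where
  "polar_cone K = {y. \<forall>x\<in>K. x \<bullet> y \<le> 0}"

definition normal_cone :: "'a::euclidean_space set \<Rightarrow> 'a \<Rightarrow> 'a set" where
  "normal_cone C x = {v. \<forall>y\<in>C. v \<bullet> (y - x) \<le> 0}"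

definition ray :: "'a::euclidean_space \<Rightarrow> 'a set" where
  "ray x = {c *\<^sub>R x | c::real. 0 \<le> c}"

definition extreme_ray :: "'a::euclidean_space set \<Rightarrow> 'a set \<Rightarrow> bool" where
  "extreme_ray C R \<longleftrightarrow> (\<exists>x. x \<noteq> 0 \<and> R = ray x \<and> R face_of C)"

definition pointed :: "'a::euclidean_space set \<Rightarrow> bool" where
  "pointed C \<longleftrightarrow> C \<inter> uminus ` C \<subseteq> {0}"

definition regular_cone :: "'a::euclidean_space set \<Rightarrow> bool" where
  "regular_cone C \<longleftrightarrow> convex_cone C \<and> pointed C \<and> closed C \<and> interior C \<noteq> {}"

definition smooth_cone :: "'a::euclidean_space set \<Rightarrow> bool" where
  "smooth_cone C \<longleftrightarrow> regular_cone C
     \<and> (\<forall>x\<in>frontier C. \<exists>R. extreme_ray C R \<and> x \<in> R)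
     \<and> (\<forall>R x. extreme_ray C R \<and> x \<in> R \<and> x \<noteq> 0 \<longrightarrow> dim (normal_cone C x) = 1)"

end

theory Submission
  imports Defs
begin

lemma adj_zero_iff:
  fixes f :: "'n::euclidean_space \<Rightarrow> 'm::euclidean_space"
  assumes "linear f"
  shows "adjoint f v = 0 \<longleftrightarrow> (\<forall>d. v \<bullet> f d = 0)"
proof
  assume "adjoint f v = 0"
  then show "\<forall>d. v \<bullet> f d = 0" using adjoint_works[OF assms] by (metis inner_commute inner_zero_right)
next
  assume H: "\<forall>d. v \<bullet> f d = 0"
  have "adjoint f v \<bullet> adjoint f v = 0"
    using adjoint_works[OF assms, of "adjoint f v" v] H by (simp add: inner_commute)
  then show "adjoint f v = 0" by simp
qed

lemma key:
  fixes K :: "'m::euclidean_space set"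
    and h :: "'n::euclidean_space \<Rightarrow> 'm"
    and h' :: "'n \<Rightarrow> ('n \<Rightarrow>\<^sub>L 'm)"
  assumes der: "\<And>x. (h has_derivative blinfun_apply (h' x)) (at x)"
    and conc: "K_concave K h"
    and ha: "h a = 0" and hb: "h b = 0"
    and vK: "v \<in> polar_cone K"
    and va: "adjoint (blinfun_apply (h' a)) v = 0"
  shows "adjoint (blinfun_apply (h' b)) v = 0"
proof -
  define \<phi> where "\<phi> = (\<lambda>y. v \<bullet> h y)"
  have dphi: "(\<phi> has_derivative (\<lambda>d. v \<bullet> blinfun_apply (h' y) d)) (at y)" for y
    unfolding \<phi>_def by (rule has_derivative_inner_right[OF der])
  have lin: "linear (blinfun_apply (h' y))" for y
    by (simp add: bounded_linear.linear blinfun.bounded_linear_right)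
  have a0: "\<forall>d. v \<bullet> blinfun_apply (h' a) d = 0"
    using va adj_zero_iff[OF lin] by blast
  have cvx: "\<phi> ((1 - t) *\<^sub>R p + t *\<^sub>R q) \<le> (1 - t) * \<phi> p + t * \<phi> q"
    if "0 \<le> t" "t \<le> 1" for p q t
  proof -
    have "h ((1 - t) *\<^sub>R p + t *\<^sub>R q) - ((1 - t) *\<^sub>R h p + t *\<^sub>R h q) \<in> K"
      using conc that unfolding K_concave_def by blast
    then have "(h ((1 - t) *\<^sub>R p + t *\<^sub>R q) - ((1 - t) *\<^sub>R h p + t *\<^sub>R h q)) \<bullet> v \<le> 0"
      using vK unfolding polar_cone_def by blast
    then have "v \<bullet> (h ((1 - t) *\<^sub>R p + t *\<^sub>R q) - ((1 - t) *\<^sub>R h p + t *\<^sub>R h q)) \<le> 0"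
      by (simp add: inner_commute)
    then show ?thesis unfolding \<phi>_def
      by (simp only: inner_diff_right inner_add_right inner_scaleR_right)
  qed
  have nonneg: "0 \<le> \<phi> y" for y
  proof -
    define g where "g = (\<lambda>s::real. \<phi> (a + s *\<^sub>R (y - a)))"
    have gc: "convex_on UNIV g"
    proof (rule convex_onI)
      fix t s1 s2 :: real assume t: "0 < t" "t < 1"
      have eq: "a + ((1 - t) *\<^sub>R s1 + t *\<^sub>R s2) *\<^sub>R (y - a)
          = (1 - t) *\<^sub>R (a + s1 *\<^sub>R (y - a)) + t *\<^sub>R (a + s2 *\<^sub>R (y - a))"
        by (simp add: algebra_simps)
      show "g ((1 - t) *\<^sub>R s1 + t *\<^sub>R s2) \<le> (1 - t) * g s1 + t * g s2"
        unfolding g_def eq using cvx t by simp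
    qed simp
    have "((\<lambda>s. a + s *\<^sub>R (y - a)) has_derivative (\<lambda>s. s *\<^sub>R (y - a))) (at 0)" (is ?D)
      by (intro derivative_eq_intros) auto
    then have "(g has_derivative (\<lambda>s. v \<bullet> blinfun_apply (h' a) (s *\<^sub>R (y - a)))) (at 0)"
      unfolding g_def using has_derivative_compose[OF \<open>?D\<close> dphi[of "a + 0 *\<^sub>R (y - a)"]] by simp
    then have "(g has_derivative (\<lambda>s. 0)) (at 0)" using a0 by simp
    then have "(g has_field_derivative 0) (at 0 within UNIV)"
      by (simp add: has_field_derivative_def mult_zero_left[abs_def])
    from convex_on_imp_above_tangent[OF gc _ _ _ this, of 1]
    have "g 1 - g 0 \<ge> 0" by simp
    moreover have "g 0 = 0" unfolding g_def \<phi>_def using ha by simp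
    ultimately show ?thesis unfolding g_def by simp
  qed
  have "\<phi> b = 0" unfolding \<phi>_def using hb by simp
  then have "eventually (\<lambda>y. \<phi> b \<le> \<phi> y) (at b)" using nonneg by simp
  from has_derivative_local_min[OF dphi this]
  have "\<forall>d. v \<bullet> blinfun_apply (h' b) d = 0" by metis
  then show ?thesis using adj_zero_iff[OF lin] by blast
qed

theorem lemma1:
  fixes K :: "'m::euclidean_space set"
    and h :: "'n::euclidean_space \<Rightarrow> 'm"
    and h' :: "'n \<Rightarrow> ('n \<Rightarrow>\<^sub>L 'm)"
    and S :: "'n set"
  assumes "smooth_cone K"
    and "\<And>x. (h has_derivative blinfun_apply (h' x)) (at x)"
    and "continuous_on UNIV h'"
    and "K_concave K h"
    and "S = {x. h x \<in> K}"
    and "x \<in> S" and "u \<in> S" and "h x = 0" and "h u = 0"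
  shows "{v. adjoint (blinfun_apply (h' x)) v = 0} \<inter> polar_cone K
       = {v. adjoint (blinfun_apply (h' u)) v = 0} \<inter> polar_cone K"
  using key[of h h' K x u] key[of h h' K u x] assms(2,4,8,9) by blast

end
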